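(* For all $n\ge0$, $r_1,r_2\in(-1,1)$ and $-1<q\le1$, \[ \sum_{s=0}^{n}\genfrac{[}{]}{0pt}{}{n}{s}_{q}r_{1}^{n-s}r_{2}^{s}\frac{(r_{1}^{2})_{s}(r_{1}r_{2})_{s}}{(r_{1}^{2}r_{2}^{2})_{s}}=\frac{w_{n}(0,r_{1},r_{2},q)}{(r_{1}^{2}r_{2}^{2})_{n}}=\phi_{n}(r_{1},r_{2},q). \]
   Context: Notation: $(a)_n=\prod_{j=0}^{n-1}(1-aq^j)$, $(a)_0=1$; $[n]_q=1+\dots+q^{n-1}$, $[0]_q=0$, $[n]_q!=\prod_{j=1}^n[j]_q$, $[0]_q!=1$; $\genfrac{[}{]}{0pt}{}{n}{k}_q=\frac{[n]_q!}{[n-k]_q![k]_q!}$ for $0\le k\le n$, else $0$. $w_n(m,r_1,r_2,q)=\sum_{s=0}^n\genfrac{[}{]}{0pt}{}{n}{s}_q r_1^s(q^mr_2^2)_s\,r_2^{n-s}(q^mr_1^2)_{n-s}$, $\phi_n(r_1,r_2,q)=w_n(0,r_1,r_2,q)/(r_1^2r_2^2)_n$. *)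

theory Defs
  imports Complex_Main
begin

definition qpoch :: "real \<Rightarrow> real \<Rightarrow> nat \<Rightarrow> real" where
  "qpoch q a n = (\<Prod>j<n. 1 - a * q ^ j)"

definition qint :: "real \<Rightarrow> nat \<Rightarrow> real" where
  "qint q n = (\<Sum>j<n. q ^ j)"

definition qfact :: "real \<Rightarrow> nat \<Rightarrow> real" where
  "qfact q n = (\<Prod>j=1..n. qint q j)"

definition qbinom :: "real \<Rightarrow> nat \<Rightarrow> nat \<Rightarrow> real" where
  "qbinom q n k = (if k \<le> n then qfact q n / (qfact q (n - k) * qfact q k) else 0)"

definition w :: "nat \<Rightarrow> nat \<Rightarrow> real \<Rightarrow> real \<Rightarrow> real \<Rightarrow> real" where
  "w n m r1 r2 q = (\<Sum>s=0..n. qbinom q n s * r1 ^ s * qpoch q (q ^ m * r2\<^sup>2) s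
                      * r2 ^ (n - s) * qpoch q (q ^ m * r1\<^sup>2) (n - s))"

definition phi :: "nat \<Rightarrow> real \<Rightarrow> real \<Rightarrow> real \<Rightarrow> real" where
  "phi n r1 r2 q = w n 0 r1 r2 q / qpoch q (r1\<^sup>2 * r2\<^sup>2) n"

end

theory Submission
  imports Defs
begin

lemma qpoch_Suc: "qpoch q a (Suc n) = qpoch q a n * (1 - a * q ^ n)"
  by (simp add: qpoch_def)

lemma qpoch_Suc': "qpoch q a (Suc n) = (1 - a) * qpoch q (a * q) n"
  unfolding qpoch_def by (simp add: prod.lessThan_Suc_shift mult.assoc del: prod.lessThan_Suc)

lemma qpoch_add: "qpoch q a (s + k) = qpoch q a s * qpoch q (a * q ^ s) k"
  by (induction k) (simp add: qpoch_def, simp add: qpoch_Suc power_add mult.assoc)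

definition PP :: "real \<Rightarrow> nat \<Rightarrow> real \<Rightarrow> real \<Rightarrow> real \<Rightarrow> real" where
  "PP q s x y B = (\<Prod>j<s. y - B * x * q ^ j)"

lemma PP_Suc': "PP q (Suc t) x y B = (y - B * x) * PP q t (x * q) y B"
  unfolding PP_def by (simp add: prod.lessThan_Suc_shift mult.assoc del: prod.lessThan_Suc)

lemma qint_add: "qint q (a + b) = qint q a + q ^ a * qint q b"
  unfolding qint_def
  by (induction b) (simp_all add: power_add algebra_simps)

lemma qint_gp: "(1 - q) * qint q j = 1 - q ^ j"
proof (induction j)
  case 0 then show ?case by (simp add: qint_def)
next
  case (Suc j)
  have "(1 - q) * qint q (Suc j) = (1 - q) * qint q j + (1 - q) * q ^ j"
    by (simp add: qint_def algebra_simps)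
  also have "\<dots> = 1 - q ^ Suc j" using Suc by (simp add: algebra_simps)
  finally show ?case .
qed

lemma qint_pos:
  assumes "q > -1" "j \<ge> 1"
  shows "qint q j > 0"
proof (cases "q \<ge> 0")
  case True
  have "qint q j = 1 + (\<Sum>i\<in>{1..<j}. q ^ i)"
    using assms(2) unfolding qint_def
    by (metis One_nat_def atLeast0LessThan power_0 sum.atLeast_Suc_lessThan zero_less_iff_neq_zero
        linorder_not_le less_one)
  moreover have "(\<Sum>i\<in>{1..<j}. q ^ i) \<ge> 0" using True by (simp add: sum_nonneg)
  ultimately show ?thesis by simp
next
  case False
  have "\<bar>q\<bar> < 1" using False assms by auto
  then have "\<bar>q\<bar> ^ j < 1" using assms(2) by (simp add: power_less_one_iff)
  then have "q ^ j < 1" by (metis abs_ge_self power_abs order.strict_trans1)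
  then have "(1 - q) * qint q j > 0" using qint_gp[of q j] by simp
  then show ?thesis using False by (simp add: zero_less_mult_iff)
qed

lemma qfact_nz:
  assumes "q > -1"
  shows "qfact q n \<noteq> 0"
proof -
  have "\<forall>a\<in>{1..n}. qint q a \<noteq> 0" using qint_pos[OF assms] by fastforce
  then show ?thesis unfolding qfact_def by simp
qed

lemma qfact_Suc: "qfact q (Suc n) = qfact q n * qint q (Suc n)"
  unfolding qfact_def by simp

lemma qbinom_0: assumes "q > -1" shows "qbinom q n 0 = 1"
  using qfact_nz[OF assms] by (simp add: qbinom_def qfact_def)

lemma qbinom_n: assumes "q > -1" shows "qbinom q n n = 1"
  using qfact_nz[OF assms] by (simp add: qbinom_def qfact_def)

lemma qbinom_sym: assumes "s \<le> n" shows "qbinom q n (n - s) = qbinom q n s"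
  using assms by (simp add: qbinom_def mult.commute)

lemma qbinom_pascal:
  assumes q: "q > -1" and "1 \<le> s" "s \<le> n"
  shows "qbinom q (Suc n) s = qbinom q n s + q ^ (Suc n - s) * qbinom q n (s - 1)"
proof -
  obtain m where sm: "s = Suc m" using assms by (cases s) auto
  define k where "k = n - s"
  have nk: "n = Suc m + k" using assms sm k_def by simp
  let ?F = "qfact q" and ?I = "qint q"
  have h1: "Suc n - s = Suc k" "n - s = k" "n - (s - 1) = Suc k" using sm nk by auto
  have nz: "?F n \<noteq> 0" "?F k \<noteq> 0" "?F m \<noteq> 0" using qfact_nz[OF q] by auto
  have i1: "?I (Suc m) > 0" "?I (Suc k) > 0" using qint_pos[OF q] by auto
  have key: "?I (Suc n) = ?I (Suc k) + q ^ Suc k * ?I (Suc m)"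
  proof -
    have "Suc n = Suc k + Suc m" using nk by simp
    then show ?thesis using qint_add[of q "Suc k" "Suc m"] by simp
  qed
  have "qbinom q (Suc n) s = ?F n * ?I (Suc n) / (?F k * ?I (Suc k) * (?F m * ?I (Suc m)))"
    using assms h1 sm by (simp add: qbinom_def qfact_Suc)
  also have "\<dots> = ?F n / (?F k * ?F m * ?I (Suc m)) + q ^ Suc k * (?F n / (?F k * ?I (Suc k) * ?F m))"
    using nz i1 key by (simp add: field_simps)
  also have "\<dots> = qbinom q n s + q ^ (Suc n - s) * qbinom q n (s - 1)"
    using assms h1 sm by (simp add: qbinom_def qfact_Suc mult.assoc)
  finally show ?thesis .
qed

lemma qbinom_Suc:
  assumes q: "q > -1"
  shows "qbinom q (Suc n) s = qbinom q n s + (if s = 0 then 0 else q ^ (Suc n - s) * qbinom q n (s - 1))"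
proof -
  consider "s = 0" | "1 \<le> s \<and> s \<le> n" | "s = Suc n" | "s > Suc n" by linarith
  then show ?thesis
  proof cases
    case 1 then show ?thesis using qbinom_0[OF q] by simp
  next
    case 2 then show ?thesis using qbinom_pascal[OF q] by simp
  next
    case 3 then show ?thesis using qbinom_n[OF q] by (simp add: qbinom_def)
  next
    case 4
    then have "\<not> s - 1 \<le> n" "\<not> s \<le> n" "\<not> s \<le> Suc n" by auto
    then show ?thesis by (simp add: qbinom_def)
  qed
qed

definition MM where
  "MM q y n x al B = (\<Sum>s=0..n. qbinom q n s * x ^ (n - s) * qpoch q al s * PP q s x y B
       * qpoch q (al * B * q ^ s) (n - s))"

definition SS where
  "SS q y n x al B = (\<Sum>s=0..n. qbinom q n s * x ^ (n - s) * y ^ s * qpoch q al s * qpoch q B (n - s))"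

lemma split_sum_Suc:
  assumes q: "q > -1"
  shows "(\<Sum>s=0..Suc n. qbinom q (Suc n) s * T s)
     = (\<Sum>s=0..n. qbinom q n s * T s) + (\<Sum>i=0..n. q ^ (n - i) * qbinom q n i * T (Suc i))"
proof -
  have "(\<Sum>s=0..Suc n. qbinom q (Suc n) s * T s)
      = (\<Sum>s=0..Suc n. qbinom q n s * T s)
        + (\<Sum>s=0..Suc n. (if s = 0 then 0 else q ^ (Suc n - s) * qbinom q n (s - 1)) * T s)"
    by (simp add: qbinom_Suc[OF q] distrib_right sum.distrib)
  also have "(\<Sum>s=0..Suc n. qbinom q n s * T s) = (\<Sum>s=0..n. qbinom q n s * T s)"
    by (simp add: qbinom_def)
  also have "(\<Sum>s=0..Suc n. (if s = 0 then 0 else q ^ (Suc n - s) * qbinom q n (s - 1)) * T s)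
     = (\<Sum>i=0..n. q ^ (n - i) * qbinom q n i * T (Suc i))"
    by (subst sum.atLeast0_atMost_Suc_shift) simp
  finally show ?thesis .
qed

lemma MM_Suc:
  assumes q: "q > -1"
  shows "MM q y (Suc n) x al B = x * (1 - al * B * q ^ n) * MM q y n x al B
          + (1 - al) * (y - B * x) * MM q y n (x * q) (al * q) B"
proof -
  define T where "T s = x ^ (Suc n - s) * qpoch q al s * PP q s x y B
       * qpoch q (al * B * q ^ s) (Suc n - s)" for s
  have "MM q y (Suc n) x al B = (\<Sum>s=0..Suc n. qbinom q (Suc n) s * T s)"
    unfolding MM_def T_def by (simp only: mult.assoc)
  also have "\<dots> = (\<Sum>s=0..n. qbinom q n s * T s) + (\<Sum>i=0..n. q ^ (n - i) * qbinom q n i * T (Suc i))"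
    by (rule split_sum_Suc[OF q])
  also have "(\<Sum>s=0..n. qbinom q n s * T s) =
     (\<Sum>s=0..n. qbinom q n s * (x ^ (Suc n - s) * qpoch q al s * PP q s x y B
       * qpoch q (al * B * q ^ s) (Suc n - s)))" unfolding T_def ..
  also have "(\<Sum>i=0..n. q ^ (n - i) * qbinom q n i * T (Suc i)) =
     (\<Sum>i=0..n. q ^ (n - i) * qbinom q n i * (x ^ (Suc n - Suc i) * qpoch q al (Suc i) * PP q (Suc i) x y B
       * qpoch q (al * B * q ^ Suc i) (Suc n - Suc i)))" unfolding T_def ..
  also have "(\<Sum>s=0..n. qbinom q n s * (x ^ (Suc n - s) * qpoch q al s * PP q s x y B
       * qpoch q (al * B * q ^ s) (Suc n - s))) = x * (1 - al * B * q ^ n) * MM q y n x al B"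
    unfolding MM_def sum_distrib_left
  proof (rule sum.cong)
    fix s assume "s \<in> {0..n}"
    then have sn: "s \<le> n" by simp
    then have e: "Suc n - s = Suc (n - s)" by simp
    have p: "q ^ s * q ^ (n - s) = q ^ n" using sn by (simp add: power_add[symmetric])
    show "qbinom q n s * (x ^ (Suc n - s) * qpoch q al s * PP q s x y B
       * qpoch q (al * B * q ^ s) (Suc n - s)) = x * (1 - al * B * q ^ n) *
       (qbinom q n s * x ^ (n - s) * qpoch q al s * PP q s x y B * qpoch q (al * B * q ^ s) (n - s))"
      unfolding e qpoch_Suc using p by (simp add: algebra_simps)
  qed simp
  also have "(\<Sum>i=0..n. q ^ (n - i) * qbinom q n i * (x ^ (Suc n - Suc i) * qpoch q al (Suc i) * PP q (Suc i) x y B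
       * qpoch q (al * B * q ^ Suc i) (Suc n - Suc i))) = (1 - al) * (y - B * x) * MM q y n (x * q) (al * q) B"
    unfolding MM_def sum_distrib_left
  proof (rule sum.cong)
    fix i assume "i \<in> {0..n}"
    have e: "al * q * B * q ^ i = al * B * q ^ Suc i" by simp
    show "q ^ (n - i) * qbinom q n i * (x ^ (Suc n - Suc i) * qpoch q al (Suc i) * PP q (Suc i) x y B
       * qpoch q (al * B * q ^ Suc i) (Suc n - Suc i)) = (1 - al) * (y - B * x) *
        (qbinom q n i * (x * q) ^ (n - i) * qpoch q (al * q) i * PP q i (x * q) y B *
         qpoch q (al * q * B * q ^ i) (n - i))"
      unfolding e qpoch_Suc' PP_Suc' by (simp add: power_mult_distrib algebra_simps)
  qed simp
  finally show ?thesis .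
qed

lemma SS_Suc:
  assumes q: "q > -1"
  shows "SS q y (Suc n) x al B = x * (1 - al * B * q ^ n) * SS q y n x al B
          + (1 - al) * (y - B * x) * SS q y n (x * q) (al * q) B"
proof -
  define T where "T s = x ^ (Suc n - s) * y ^ s * qpoch q al s * qpoch q B (Suc n - s)" for s
  have "SS q y (Suc n) x al B = (\<Sum>s=0..Suc n. qbinom q (Suc n) s * T s)"
    unfolding SS_def T_def by (simp only: mult.assoc)
  also have "\<dots> = (\<Sum>s=0..n. qbinom q n s * T s) + (\<Sum>i=0..n. q ^ (n - i) * qbinom q n i * T (Suc i))"
    by (rule split_sum_Suc[OF q])
  also have "(\<Sum>s=0..n. qbinom q n s * T s) =
     (\<Sum>s=0..n. qbinom q n s * (x ^ (Suc n - s) * y ^ s * qpoch q al s * qpoch q B (Suc n - s)))"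
    unfolding T_def ..
  also have "(\<Sum>i=0..n. q ^ (n - i) * qbinom q n i * T (Suc i)) =
     (\<Sum>i=0..n. q ^ (n - i) * qbinom q n i * (x ^ (Suc n - Suc i) * y ^ Suc i * qpoch q al (Suc i)
        * qpoch q B (Suc n - Suc i)))" unfolding T_def ..
  also have "(\<Sum>i=0..n. q ^ (n - i) * qbinom q n i * (x ^ (Suc n - Suc i) * y ^ Suc i * qpoch q al (Suc i)
        * qpoch q B (Suc n - Suc i))) = y * (1 - al) * SS q y n (x * q) (al * q) B"
    unfolding SS_def sum_distrib_left
    by (rule sum.cong) (simp_all add: qpoch_Suc' power_mult_distrib algebra_simps)
  also have "(\<Sum>s=0..n. qbinom q n s * (x ^ (Suc n - s) * y ^ s * qpoch q al s * qpoch q B (Suc n - s)))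
     = x * (1 - al * B * q ^ n) * SS q y n x al B - (1 - al) * B * x * SS q y n (x * q) (al * q) B"
    unfolding SS_def sum_distrib_left sum_subtractf[symmetric]
  proof (rule sum.cong)
    fix s assume "s \<in> {0..n}"
    then have sn: "s \<le> n" by simp
    then have e: "Suc n - s = Suc (n - s)" by simp
    have p: "q ^ n = q ^ (n - s) * q ^ s" using sn by (simp add: power_add[symmetric])
    have a: "(1 - al) * qpoch q (al * q) s = qpoch q al s * (1 - al * q ^ s)"
      using qpoch_Suc'[of q al s] qpoch_Suc[of q al s] by simp
    show "qbinom q n s * (x ^ (Suc n - s) * y ^ s * qpoch q al s * qpoch q B (Suc n - s)) =
         x * (1 - al * B * q ^ n) * (qbinom q n s * x ^ (n - s) * y ^ s * qpoch q al s * qpoch q B (n - s)) -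
         (1 - al) * B * x * (qbinom q n s * (x * q) ^ (n - s) * y ^ s * qpoch q (al * q) s * qpoch q B (n - s))"
    proof -
      have "(1 - al) * B * x * (qbinom q n s * (x * q) ^ (n - s) * y ^ s * qpoch q (al * q) s * qpoch q B (n - s))
        = B * x * q ^ (n - s) * (qbinom q n s * x ^ (n - s) * y ^ s * ((1 - al) * qpoch q (al * q) s) * qpoch q B (n - s))"
        by (simp add: power_mult_distrib algebra_simps)
      also have "\<dots> = B * x * q ^ (n - s) * (qbinom q n s * x ^ (n - s) * y ^ s * (qpoch q al s * (1 - al * q ^ s)) * qpoch q B (n - s))"
        by (simp only: a)
      finally have f: "(1 - al) * B * x * (qbinom q n s * (x * q) ^ (n - s) * y ^ s * qpoch q (al * q) s * qpoch q B (n - s))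
        = B * x * q ^ (n - s) * (qbinom q n s * x ^ (n - s) * y ^ s * (qpoch q al s * (1 - al * q ^ s)) * qpoch q B (n - s))" .
      show ?thesis unfolding f unfolding e qpoch_Suc p by (simp add: algebra_simps)
    qed
  qed simp
  finally show ?thesis by (simp add: algebra_simps)
qed

lemma MM_SS:
  assumes q: "q > -1"
  shows "MM q y n x al B = SS q y n x al B"
proof (induction n arbitrary: x al)
  case 0
  then show ?case using qbinom_0[OF q, of 0] by (simp add: MM_def SS_def PP_def qpoch_def)
next
  case (Suc n)
  then show ?case by (simp add: MM_Suc[OF q] SS_Suc[OF q])
qed

lemma qpoch_nz:
  assumes "\<bar>c\<bar> < 1" "\<bar>q\<bar> \<le> 1"
  shows "qpoch q c k \<noteq> 0"
proof -
  have "1 - c * q ^ j \<noteq> 0" for j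
  proof -
    have "\<bar>q\<bar> ^ j \<le> 1" using assms(2) by (simp add: power_le_one)
    then have "\<bar>c * q ^ j\<bar> \<le> \<bar>c\<bar>"
      by (simp add: abs_mult power_abs mult_left_le)
    then have "\<bar>c * q ^ j\<bar> < 1" using assms(1) by linarith
    then show ?thesis by auto
  qed
  then show ?thesis unfolding qpoch_def by simp
qed

lemma PP_sq: "PP q s x y (y\<^sup>2) = y ^ s * qpoch q (x * y) s"
proof -
  have e: "y - y\<^sup>2 * x * q ^ j = y * (1 - x * y * q ^ j)" for j
    by (simp add: power2_eq_square algebra_simps)
  show ?thesis unfolding PP_def qpoch_def e prod.distrib by simp
qed

theorem mainTheorem7:
  fixes n :: nat and r1 r2 q :: real
  assumes "-1 < r1" "r1 < 1" "-1 < r2" "r2 < 1" "-1 < q" "q \<le> 1"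
  shows "(\<Sum>s=0..n. qbinom q n s * r1 ^ (n - s) * r2 ^ s *
            (qpoch q (r1\<^sup>2) s * qpoch q (r1 * r2) s) / qpoch q (r1\<^sup>2 * r2\<^sup>2) s)
           = w n 0 r1 r2 q / qpoch q (r1\<^sup>2 * r2\<^sup>2) n
         \<and> w n 0 r1 r2 q / qpoch q (r1\<^sup>2 * r2\<^sup>2) n = phi n r1 r2 q"
proof
  let ?g = "r1\<^sup>2 * r2\<^sup>2"
  have q1: "\<bar>q\<bar> \<le> 1" using assms by auto
  have a1: "\<bar>r1\<bar> < 1" "\<bar>r2\<bar> < 1" using assms by auto
  have "\<bar>?g\<bar> = \<bar>r1\<bar>\<^sup>2 * \<bar>r2\<bar>\<^sup>2" by (simp add: abs_mult power_abs)
  also have "\<dots> < 1"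
  proof -
    have "\<bar>r1\<bar>\<^sup>2 < 1" "\<bar>r2\<bar>\<^sup>2 < 1" using a1 by (simp_all add: abs_square_less_1)
    moreover have "\<bar>r1\<bar>\<^sup>2 * \<bar>r2\<bar>\<^sup>2 \<le> \<bar>r1\<bar>\<^sup>2 * 1"
      using \<open>\<bar>r2\<bar>\<^sup>2 < 1\<close> by (intro mult_left_mono) auto
    ultimately show ?thesis by linarith
  qed
  finally have g1: "\<bar>?g\<bar> < 1" .
  have gnz: "qpoch q ?g k \<noteq> 0" for k using qpoch_nz[OF g1 q1] .
  have tm: "qbinom q n s * r1 ^ (n - s) * r2 ^ s *
            (qpoch q (r1\<^sup>2) s * qpoch q (r1 * r2) s) / qpoch q ?g s
      = (qbinom q n s * r1 ^ (n - s) * qpoch q (r1\<^sup>2) s * PP q s r1 r2 (r2\<^sup>2)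
          * qpoch q (r1\<^sup>2 * r2\<^sup>2 * q ^ s) (n - s)) / qpoch q ?g n"
    if "s \<in> {0..n}" for s
  proof -
    from that have "n = s + (n - s)" by simp
    then have sp: "qpoch q ?g n = qpoch q ?g s * qpoch q (?g * q ^ s) (n - s)"
      by (metis qpoch_add)
    have nz2: "qpoch q (?g * q ^ s) (n - s) \<noteq> 0" using gnz[of n] sp by auto
    show ?thesis unfolding sp PP_sq using gnz[of s] nz2 by (simp add: field_simps)
  qed
  have "(\<Sum>s=0..n. qbinom q n s * r1 ^ (n - s) * r2 ^ s *
            (qpoch q (r1\<^sup>2) s * qpoch q (r1 * r2) s) / qpoch q ?g s)
      = MM q r2 n r1 (r1\<^sup>2) (r2\<^sup>2) / qpoch q ?g n"
    unfolding MM_def sum_divide_distrib using tm by (rule sum.cong[OF refl])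
  also have "MM q r2 n r1 (r1\<^sup>2) (r2\<^sup>2) = SS q r2 n r1 (r1\<^sup>2) (r2\<^sup>2)"
    using MM_SS assms(5) by blast
  also have "SS q r2 n r1 (r1\<^sup>2) (r2\<^sup>2) = w n 0 r1 r2 q"
  proof -
    have "w n 0 r1 r2 q = (\<Sum>s=0..n. qbinom q n (n - s) * r1 ^ (n - s) * qpoch q (r2\<^sup>2) (n - s)
                      * r2 ^ (n - (n - s)) * qpoch q (r1\<^sup>2) (n - (n - s)))"
      unfolding w_def by (subst sum.atLeastAtMost_rev) simp
    also have "\<dots> = SS q r2 n r1 (r1\<^sup>2) (r2\<^sup>2)"
      unfolding SS_def by (rule sum.cong[OF refl]) (simp add: qbinom_sym)
    finally show ?thesis by simp
  qed
  finally show "(\<Sum>s=0..n. qbinom q n s * r1 ^ (n - s) * r2 ^ s *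
            (qpoch q (r1\<^sup>2) s * qpoch q (r1 * r2) s) / qpoch q ?g s)
      = w n 0 r1 r2 q / qpoch q ?g n" .
next
  show "w n 0 r1 r2 q / qpoch q (r1\<^sup>2 * r2\<^sup>2) n = phi n r1 r2 q" by (simp add: phi_def)
qed

end
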